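(* Let $n$ and $k$ be even integers with $1\le k<n/2$. If $n\neq 4k$, then $C(n,k)=\langle\rho,\delta,\beta\rangle\cong \mathrm{D}_{2n}\times\mathbb{Z}_2$. If $n=4k$, then $C(n,k)=\langle\rho,\delta,\beta,\theta\rangle$.
   Context: $\mathrm{DGP}(n,k)$ ($1\le k<n/2$) is the graph with vertex set $\{(u_i,j),(v_i,j): 0\le i\le n-1,\ j\in\{0,1\}\}$ and edges $\{(u_i,j),(u_{i+1},1-j)\}$ (outer edges, forming the set $\mathcal{O}$), $\{(u_i,j),(v_i,1-j)\}$ (spokes, the set $\mathcal{S}$), $\{(v_i,j),(v_{i+k},1-j)\}$ (inner edges, the set $\mathcal{I}$), subscripts mod $n$; it is the canonical double cover of the generalized Petersen graph $\mathrm{GP}(n,k)$. Let $A(n,k)$ be its automorphism group and $C(n,k)$ the subgroup stabilizing each of $\mathcal{O},\mathcal{I},\mathcal{S}$ setwise. Define permutations of the vertex set: $(u_i,j)^\rho=(u_{i+1},j)$, $(v_i,j)^\rho=(v_{i+1},j)$; $(u_i,j)^\delta=(u_{-i},j)$, $(v_i,j)^\delta=(v_{-i},j)$; $(u_i,j)^\beta=(u_i,1-j)$, $(v_i,j)^\beta=(v_i,1-j)$. When $n=4k$ with $k$ even, define $\theta$ by: if $i+j$ is odd, $(u_i,j)^\theta=(u_{i+2k},j)$ and $(v_i,j)^\theta=(v_i,j)$; if $i+j$ is even, $(u_i,j)^\theta=(u_i,j)$ and $(v_i,j)^\theta=(v_{i+2k},j)$. $\mathrm{D}_{2n}$ is the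 dihedral group of order $2n$. *)

theory Defs
  imports "HOL-Algebra.Algebra"
begin

text \<open>Vertices of DGP(n,k): (side, i, j) with side U or V, 0 <= i < n, j in {0,1}
  (j encoded as bool: False = 0, True = 1).\<close>

datatype side = U | V

type_synonym vert = "side \<times> nat \<times> bool"

definition verts :: "nat \<Rightarrow> vert set" where
  "verts n = {(s, i, j). i < n}"

definition outer_edges :: "nat \<Rightarrow> vert set set" where
  "outer_edges n = {{(U, i, j), (U, (i + 1) mod n, \<not> j)} | i j. i < n}"

definition spoke_edges :: "nat \<Rightarrow> vert set set" where
  "spoke_edges n = {{(U, i, j), (V, i, \<not> j)} | i j. i < n}"

definition inner_edges :: "nat \<Rightarrow> nat \<Rightarrow> vert set set" where
  "inner_edges n k = {{(V, i, j), (V, (i + k) mod n, \<not> j)} | i j. i < n}"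

abbreviation SymV :: "nat \<Rightarrow> (vert \<Rightarrow> vert) monoid" where
  "SymV n \<equiv> BijGroup (verts n)"

text \<open>C(n,k): permutations of the vertex set stabilizing O, I, S setwise
  (such permutations are automatically automorphisms of DGP(n,k)).\<close>
definition Cnk :: "nat \<Rightarrow> nat \<Rightarrow> (vert \<Rightarrow> vert) set" where
  "Cnk n k = {\<sigma> \<in> carrier (SymV n).
      (\<lambda>e. \<sigma> ` e) ` outer_edges n = outer_edges n \<and>
      (\<lambda>e. \<sigma> ` e) ` inner_edges n k = inner_edges n k \<and>
      (\<lambda>e. \<sigma> ` e) ` spoke_edges n = spoke_edges n}"

definition rho :: "nat \<Rightarrow> vert \<Rightarrow> vert" where
  "rho n = restrict (\<lambda>(s, i, j). (s, (i + 1) mod n, j)) (verts n)"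

definition delta :: "nat \<Rightarrow> vert \<Rightarrow> vert" where
  "delta n = restrict (\<lambda>(s, i, j). (s, (n - i) mod n, j)) (verts n)"

definition beta :: "nat \<Rightarrow> vert \<Rightarrow> vert" where
  "beta n = restrict (\<lambda>(s, i, j). (s, i, \<not> j)) (verts n)"

definition theta :: "nat \<Rightarrow> nat \<Rightarrow> vert \<Rightarrow> vert" where
  "theta n k = restrict (\<lambda>(s, i, j).
      if odd (i + (if j then 1 else 0))
      then (if s = U then (s, (i + 2 * k) mod n, j) else (s, i, j))
      else (if s = U then (s, i, j) else (s, (i + 2 * k) mod n, j))) (verts n)"

text \<open>Dihedral group of order 2n, as the group of symmetries of the n-cycle on {0..<n},
  generated by rotation and reflection.\<close>
definition dihedral :: "nat \<Rightarrow> (nat \<Rightarrow> nat) monoid" where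
  "dihedral n = (BijGroup {..<n}) \<lparr> carrier :=
      generate (BijGroup {..<n})
        {restrict (\<lambda>i. (i + 1) mod n) {..<n}, restrict (\<lambda>i. (n - i) mod n) {..<n}} \<rparr>"

end

theory Submission
  imports Defs
begin


lemma mem_verts[simp]: "(s,i,j) \<in> verts n \<longleftrightarrow> i < n"
  by (simp add: verts_def)

lemma img_eq:
  assumes "bij_betw f A A" "\<forall>e\<in>E. e \<subseteq> A" "finite E" "(\<lambda>e. f ` e) ` E \<subseteq> E"
  shows "(\<lambda>e. f ` e) ` E = E"
proof -
  have inj: "inj_on f A" using assms(1) bij_betw_def by blast
  have "inj_on (\<lambda>e. f ` e) E"
    using inj_on_image_eq_iff[OF inj] assms(2) by (auto simp: inj_on_def)
  hence "card ((\<lambda>e. f ` e) ` E) = card E" by (rule card_image)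
  thus ?thesis using assms(3,4) by (simp add: card_subset_eq)
qed

lemma pres_gen:
  assumes "inj_on f A" "\<forall>e\<in>E. e \<subseteq> A" "(\<lambda>e. f ` e) ` E = E" "x \<in> A" "y \<in> A"
  shows "{f x, f y} \<in> E \<longleftrightarrow> {x, y} \<in> E"
proof
  assume "{x,y} \<in> E"
  hence "f ` {x,y} \<in> (\<lambda>e. f ` e) ` E" by (rule imageI)
  thus "{f x, f y} \<in> E" using assms(3) by simp
next
  assume "{f x, f y} \<in> E"
  hence "f ` {x,y} \<in> (\<lambda>e. f ` e) ` E" using assms(3) by simp
  then obtain e where e: "e \<in> E" "f ` {x,y} = f ` e" by auto
  have s1: "{x,y} \<subseteq> A" using assms(4,5) by auto
  have s2: "e \<subseteq> A" using assms(2) e(1) by auto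
  from inj_on_image_eq_iff[OF assms(1) s1 s2] e(2) have "{x,y} = e" by blast
  thus "{x,y} \<in> E" using e by simp
qed

lemma BijI:
  assumes "f \<in> extensional A" "\<And>x. x\<in>A \<Longrightarrow> f x \<in> A" "\<And>x. x\<in>A \<Longrightarrow> g x \<in> A"
    "\<And>x. x\<in>A \<Longrightarrow> g (f x) = x" "\<And>x. x\<in>A \<Longrightarrow> f (g x) = x"
  shows "f \<in> Bij A"
  unfolding Bij_def using assms by (auto intro!: bij_betw_byWitness[where f'=g])

lemma Bij_inj: "f \<in> Bij A \<Longrightarrow> inj_on f A" by (simp add: Bij_def bij_betw_def)
lemma Bij_bij: "f \<in> Bij A \<Longrightarrow> bij_betw f A A" by (simp add: Bij_def)
lemma Bij_in: "f \<in> Bij A \<Longrightarrow> x \<in> A \<Longrightarrow> f x \<in> A" using Bij_imp_funcset by blast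
lemma Bij_ext: "f \<in> Bij A \<Longrightarrow> x \<notin> A \<Longrightarrow> f x = undefined"
  using Bij_imp_extensional extensional_arb by metis

lemma inv_img: assumes "f \<in> Bij A" "e \<subseteq> A"
  shows "(\<lambda>x\<in>A. inv_into A f x) ` (f ` e) = e"
proof -
  have "\<And>x. x \<in> e \<Longrightarrow> (\<lambda>x\<in>A. inv_into A f x) (f x) = x"
    using assms Bij_in[OF assms(1)] inv_into_f_f[OF Bij_inj[OF assms(1)]] by auto
  have "(\<lambda>x\<in>A. inv_into A f x) ` (f ` e) = (\<lambda>x. x) ` e"
    unfolding image_image by (rule image_cong[OF refl]) fact
  thus ?thesis by simp
qed

lemma comp_img: "e \<subseteq> A \<Longrightarrow> compose A f g ` e = f ` (g ` e)"
  by (auto simp: compose_def image_image intro!: image_cong)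

locale dgp =
  fixes n k :: nat
  assumes ev_n: "even n" and ev_k: "even k" and k1: "1 \<le> k" and kn: "2 * k < n"
begin

abbreviation "VV \<equiv> verts n"
abbreviation "GG \<equiv> SymV n"
abbreviation "OE \<equiv> outer_edges n"
abbreviation "IE \<equiv> inner_edges n k"
abbreviation "SE \<equiv> spoke_edges n"
abbreviation "CC \<equiv> Cnk n k"

lemma k2: "2 \<le> k" using ev_k k1 by (cases "k = 1") auto
lemma n6: "6 \<le> n" using k2 kn ev_n by presburger
lemma npos: "0 < n" using n6 by simp

lemma mod2: "x < 2 * n \<Longrightarrow> x mod n = (if x < n then x else x - n)"
  by (simp add: le_mod_geq)

lemma modsub: assumes "c \<le> n" "i < n" "i' < n"
  shows "(i = (i' + c) mod n) \<longleftrightarrow> (i' = (i + n - c) mod n)"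
  using assms by (auto simp: mod2)

lemma par_mod: "even (x mod n) \<longleftrightarrow> even x"
  using ev_n by (simp add: dvd_mod_iff)

lemma fin_OE: "finite OE"
proof -
  have "OE \<subseteq> (\<lambda>(i,j). {(U,i,j),(U,(i+1) mod n, \<not> j)}) ` ({..<n} \<times> UNIV)"
    by (auto simp: outer_edges_def)
  thus ?thesis by (rule finite_subset) auto
qed
lemma fin_IE: "finite IE"
proof -
  have "IE \<subseteq> (\<lambda>(i,j). {(V,i,j),(V,(i+k) mod n, \<not> j)}) ` ({..<n} \<times> UNIV)"
    by (auto simp: inner_edges_def)
  thus ?thesis by (rule finite_subset) auto
qed
lemma fin_SE: "finite SE"
proof -
  have "SE \<subseteq> (\<lambda>(i,j). {(U,i,j),(V,i, \<not> j)}) ` ({..<n} \<times> UNIV)"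
    by (auto simp: spoke_edges_def)
  thus ?thesis by (rule finite_subset) auto
qed

lemma OE_sub: "\<forall>e\<in>OE. e \<subseteq> VV" using npos by (auto simp: outer_edges_def)
lemma IE_sub: "\<forall>e\<in>IE. e \<subseteq> VV" using npos by (auto simp: inner_edges_def)
lemma SE_sub: "\<forall>e\<in>SE. e \<subseteq> VV" by (auto simp: spoke_edges_def)

lemma carrG: "carrier GG = Bij VV" by (simp add: BijGroup_def)
lemma oneG: "\<one>\<^bsub>GG\<^esub> = (\<lambda>x\<in>VV. x)" by (simp add: BijGroup_def)
lemma multG: "f \<in> Bij VV \<Longrightarrow> g \<in> Bij VV \<Longrightarrow> f \<otimes>\<^bsub>GG\<^esub> g = compose VV f g"
  by (simp add: BijGroup_def)
lemma grpG: "group GG" by (rule group_BijGroup)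

lemma CI:
  assumes "f \<in> Bij VV" "\<forall>e\<in>OE. f ` e \<in> OE" "\<forall>e\<in>IE. f ` e \<in> IE" "\<forall>e\<in>SE. f ` e \<in> SE"
  shows "f \<in> CC"
proof -
  have b: "bij_betw f VV VV" by (rule Bij_bij[OF assms(1)])
  have "(\<lambda>e. f ` e) ` OE = OE" by (rule img_eq[OF b OE_sub fin_OE]) (use assms(2) in blast)
  moreover have "(\<lambda>e. f ` e) ` IE = IE" by (rule img_eq[OF b IE_sub fin_IE]) (use assms(3) in blast)
  moreover have "(\<lambda>e. f ` e) ` SE = SE" by (rule img_eq[OF b SE_sub fin_SE]) (use assms(4) in blast)
  ultimately show ?thesis unfolding Cnk_def carrG using assms(1) by blast
qed

lemma CB: "f \<in> CC \<Longrightarrow> f \<in> Bij VV" by (simp add: Cnk_def carrG)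
lemma CO: "f \<in> CC \<Longrightarrow> (\<lambda>e. f ` e) ` OE = OE" by (simp add: Cnk_def)
lemma CIE: "f \<in> CC \<Longrightarrow> (\<lambda>e. f ` e) ` IE = IE" by (simp add: Cnk_def)
lemma CS: "f \<in> CC \<Longrightarrow> (\<lambda>e. f ` e) ` SE = SE" by (simp add: Cnk_def)

lemma presO: "f \<in> CC \<Longrightarrow> x \<in> VV \<Longrightarrow> y \<in> VV \<Longrightarrow> {f x, f y} \<in> OE \<longleftrightarrow> {x,y} \<in> OE"
  using pres_gen[OF Bij_inj[OF CB] OE_sub CO] by blast
lemma presI: "f \<in> CC \<Longrightarrow> x \<in> VV \<Longrightarrow> y \<in> VV \<Longrightarrow> {f x, f y} \<in> IE \<longleftrightarrow> {x,y} \<in> IE"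
  using pres_gen[OF Bij_inj[OF CB] IE_sub CIE] by blast
lemma presS: "f \<in> CC \<Longrightarrow> x \<in> VV \<Longrightarrow> y \<in> VV \<Longrightarrow> {f x, f y} \<in> SE \<longleftrightarrow> {x,y} \<in> SE"
  using pres_gen[OF Bij_inj[OF CB] SE_sub CS] by blast

lemma subC: "subgroup CC GG"
proof (rule group.subgroupI[OF grpG])
  show "CC \<subseteq> carrier GG" by (auto simp: Cnk_def)
  have "\<one>\<^bsub>GG\<^esub> \<in> CC"
  proof (rule CI)
    show "\<one>\<^bsub>GG\<^esub> \<in> Bij VV" using oneG id_Bij by simp
    have "\<And>e. e \<subseteq> VV \<Longrightarrow> \<one>\<^bsub>GG\<^esub> ` e = e" using oneG by auto
    thus "\<forall>e\<in>OE. \<one>\<^bsub>GG\<^esub> ` e \<in> OE" "\<forall>e\<in>IE. \<one>\<^bsub>GG\<^esub> ` e \<in> IE" "\<forall>e\<in>SE. \<one>\<^bsub>GG\<^esub> ` e \<in> SE"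
      using OE_sub IE_sub SE_sub by auto
  qed
  thus "CC \<noteq> {}" by blast
next
  fix a assume a: "a \<in> CC"
  have aB: "a \<in> Bij VV" using CB[OF a] .
  have ia: "inv\<^bsub>GG\<^esub> a = (\<lambda>x\<in>VV. inv_into VV a x)" using inv_BijGroup[OF aB] .
  have gen: "\<forall>e\<in>E. (inv\<^bsub>GG\<^esub> a) ` e \<in> E" if E: "\<forall>e\<in>E. e \<subseteq> VV" "(\<lambda>e. a ` e) ` E = E" for E
  proof
    fix e assume "e \<in> E"
    then obtain e' where "e' \<in> E" "e = a ` e'" using E(2) by blast
    thus "(inv\<^bsub>GG\<^esub> a) ` e \<in> E" using ia inv_img[OF aB] E(1) by simp
  qed
  show "inv\<^bsub>GG\<^esub> a \<in> CC"
  proof (rule CI)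
    show "inv\<^bsub>GG\<^esub> a \<in> Bij VV" using ia restrict_inv_into_Bij[OF aB] by simp
  qed (rule gen[OF OE_sub CO[OF a]], rule gen[OF IE_sub CIE[OF a]], rule gen[OF SE_sub CS[OF a]])
next
  fix a b assume a: "a \<in> CC" and b: "b \<in> CC"
  have m: "a \<otimes>\<^bsub>GG\<^esub> b = compose VV a b" using multG[OF CB[OF a] CB[OF b]] .
  have gen: "\<forall>e\<in>E. compose VV a b ` e \<in> E" if E: "\<forall>e\<in>E. e \<subseteq> VV" "(\<lambda>e. a ` e) ` E = E" "(\<lambda>e. b ` e) ` E = E" for E
  proof
    fix e assume e: "e \<in> E"
    have "b ` e \<in> E" using e E(3) by blast
    hence "a ` (b ` e) \<in> E" using E(2) by blast
    thus "compose VV a b ` e \<in> E" using comp_img E(1) e by metis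
  qed
  show "a \<otimes>\<^bsub>GG\<^esub> b \<in> CC" unfolding m
  proof (rule CI)
    show "compose VV a b \<in> Bij VV" using compose_Bij CB a b by blast
  qed (rule gen[OF OE_sub CO[OF a] CO[OF b]], rule gen[OF IE_sub CIE[OF a] CIE[OF b]], rule gen[OF SE_sub CS[OF a] CS[OF b]])
qed


lemma OE_mem: "i < n \<Longrightarrow> {(U,i,j),(U,(i+1) mod n,\<not>j)} \<in> OE"
  unfolding outer_edges_def by blast
lemma IE_mem: "i < n \<Longrightarrow> {(V,i,j),(V,(i+k) mod n,\<not>j)} \<in> IE"
  unfolding inner_edges_def by blast
lemma SE_mem: "i < n \<Longrightarrow> {(U,i,j),(V,i,\<not>j)} \<in> SE"
  unfolding spoke_edges_def by blast
lemma SE_mem': "i < n \<Longrightarrow> {(V,i,j),(U,i,\<not>j)} \<in> SE"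
  using SE_mem[of i "\<not>j"] by (simp add: insert_commute)

lemma inO: assumes "a < n" "b < n" "b = (a+1) mod n \<or> a = (b+1) mod n"
  shows "{(U,a,j),(U,b,\<not>j)} \<in> OE"
  using assms(3)
proof
  assume "b = (a+1) mod n" thus ?thesis using OE_mem[OF assms(1)] by simp
next
  assume h: "a = (b+1) mod n"
  have "{(U,a,j),(U,b,\<not>j)} = {(U,b,\<not>j),(U,(b+1) mod n,\<not>\<not>j)}" using h by auto
  thus ?thesis using OE_mem[OF assms(2), of "\<not>j"] by simp
qed

lemma inI: assumes "a < n" "b < n" "b = (a+k) mod n \<or> a = (b+k) mod n"
  shows "{(V,a,j),(V,b,\<not>j)} \<in> IE"
  using assms(3)
proof
  assume "b = (a+k) mod n" thus ?thesis using IE_mem[OF assms(1)] by simp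
next
  assume h: "a = (b+k) mod n"
  have "{(V,a,j),(V,b,\<not>j)} = {(V,b,\<not>j),(V,(b+k) mod n,\<not>\<not>j)}" using h by auto
  thus ?thesis using IE_mem[OF assms(2), of "\<not>j"] by simp
qed

lemma nbrO: assumes "i < n"
  shows "{(U,i,j), y} \<in> OE \<longleftrightarrow> (y = (U,(i+1) mod n, \<not>j) \<or> y = (U,(i+n-1) mod n, \<not>j))"
proof
  assume "{(U,i,j), y} \<in> OE"
  then obtain i' j' where h: "{(U,i,j), y} = {(U,i',j'),(U,(i'+1) mod n, \<not>j')}" "i' < n"
    unfolding outer_edges_def by blast
  from h(1) have "((U,i,j) = (U,i',j') \<and> y = (U,(i'+1) mod n, \<not>j')) \<or> ((U,i,j) = (U,(i'+1) mod n, \<not>j') \<and> y = (U,i',j'))"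
    by (simp add: doubleton_eq_iff)
  thus "y = (U,(i+1) mod n, \<not>j) \<or> y = (U,(i+n-1) mod n, \<not>j)"
    using modsub[of 1 i i'] assms h(2) n6 by auto
next
  assume "y = (U,(i+1) mod n, \<not>j) \<or> y = (U,(i+n-1) mod n, \<not>j)"
  moreover have "i = ((i+n-1) mod n + 1) mod n" using modsub[of 1 i "(i+n-1) mod n"] assms npos by simp
  ultimately show "{(U,i,j), y} \<in> OE" using inO[of i] assms npos by auto
qed

lemma nbrI: assumes "i < n"
  shows "{(V,i,j), y} \<in> IE \<longleftrightarrow> (y = (V,(i+k) mod n, \<not>j) \<or> y = (V,(i+n-k) mod n, \<not>j))"
proof
  assume "{(V,i,j), y} \<in> IE"
  then obtain i' j' where h: "{(V,i,j), y} = {(V,i',j'),(V,(i'+k) mod n, \<not>j')}" "i' < n"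
    unfolding inner_edges_def by blast
  from h(1) have "((V,i,j) = (V,i',j') \<and> y = (V,(i'+k) mod n, \<not>j')) \<or> ((V,i,j) = (V,(i'+k) mod n, \<not>j') \<and> y = (V,i',j'))"
    by (simp add: doubleton_eq_iff)
  thus "y = (V,(i+k) mod n, \<not>j) \<or> y = (V,(i+n-k) mod n, \<not>j)"
    using modsub[of k i i'] assms h(2) kn by auto
next
  assume "y = (V,(i+k) mod n, \<not>j) \<or> y = (V,(i+n-k) mod n, \<not>j)"
  moreover have "i = ((i+n-k) mod n + k) mod n" using modsub[of k i "(i+n-k) mod n"] assms npos kn by simp
  ultimately show "{(V,i,j), y} \<in> IE" using inI[of i] assms npos by auto
qed

lemma nbrSU: "i < n \<Longrightarrow> {(U,i,j), y} \<in> SE \<longleftrightarrow> y = (V,i,\<not>j)"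
  using SE_mem[of i j] by (auto simp: spoke_edges_def doubleton_eq_iff)
lemma nbrSV: "i < n \<Longrightarrow> {(V,i,j), y} \<in> SE \<longleftrightarrow> y = (U,i,\<not>j)"
  using SE_mem'[of i j] by (auto simp: spoke_edges_def doubleton_eq_iff)

lemma OE_U: "e \<in> OE \<Longrightarrow> x \<in> e \<Longrightarrow> fst x = U" by (auto simp: outer_edges_def)

lemma sideU: assumes f: "f \<in> CC" and i: "i < n" shows "\<exists>a b. f (U,i,j) = (U,a,b) \<and> a < n"
proof -
  have "{(U,i,j),(U,(i+1) mod n,\<not>j)} \<in> OE" using OE_mem i by blast
  hence "{f (U,i,j), f (U,(i+1) mod n,\<not>j)} \<in> OE" using presO[OF f] i npos by simp
  hence "fst (f (U,i,j)) = U" using OE_U by blast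
  moreover have "f (U,i,j) \<in> VV" using Bij_in[OF CB[OF f]] i by simp
  ultimately show ?thesis by (cases "f (U,i,j)") auto
qed

lemma inj_C: "f \<in> CC \<Longrightarrow> x \<in> VV \<Longrightarrow> y \<in> VV \<Longrightarrow> f x = f y \<Longrightarrow> x = y"
  using Bij_inj[OF CB] inj_onD by metis

lemma fixU0:
  assumes t: "t \<in> CC" and f0: "t (U,0,False) = (U,0,False)" and f1: "t (U,1,True) = (U,1,True)"
    and i: "i < n"
  shows "t (U,i,odd i) = (U,i,odd i)"
proof -
  have claim: "i + 1 < n \<Longrightarrow> t (U,i,odd i) = (U,i,odd i) \<and> t (U,i+1,odd (i+1)) = (U,i+1,odd (i+1))" for i
  proof (induction i)
    case 0 then show ?case using f0 f1 by simp
  next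
    case (Suc m)
    then have IH: "t (U,m,odd m) = (U,m,odd m)" "t (U,m+1,odd (m+1)) = (U,m+1,odd (m+1))" by auto
    have m2: "m + 2 < n" using Suc.prems by simp
    define x where "x = (U,m+1,odd (m+1))"
    define y where "y = (U,m+2,odd (m+2))"
    define z where "z = (U,m,odd m)"
    have V: "x \<in> VV" "y \<in> VV" "z \<in> VV" using m2 by (auto simp: x_def y_def z_def)
    have "{x, (U,(m+1+1) mod n, \<not> odd (m+1))} \<in> OE" unfolding x_def by (rule OE_mem) (use m2 in simp)
    moreover have "(U,(m+1+1) mod n, \<not> odd (m+1)) = y" using m2 by (simp add: y_def)
    ultimately have "{x, y} \<in> OE" by simp
    hence "{t x, t y} \<in> OE" using presO[OF t V(1,2)] by simp
    hence "{x, t y} \<in> OE" using IH x_def by simp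
    hence "t y = (U,(m+1+1) mod n, \<not>odd (m+1)) \<or> t y = (U,(m+1+n-1) mod n, \<not> odd (m+1))"
      unfolding x_def using nbrO m2 by simp
    moreover have "(U,(m+1+1) mod n, \<not> odd (m+1)) = y" using m2 by (simp add: y_def)
    moreover have "(U,(m+1+n-1) mod n, \<not> odd (m+1)) = z" using m2 by (simp add: z_def)
    moreover have "t y \<noteq> z"
    proof
      assume "t y = z"
      hence "t y = t z" using IH z_def by simp
      hence "y = z" using inj_C[OF t V(2,3)] by simp
      thus False by (simp add: y_def z_def)
    qed
    ultimately have "t y = y" by auto
    thus ?case using IH y_def by simp
  qed
  show ?thesis
  proof (cases "i + 1 < n")
    case True thus ?thesis using claim by blast
  next
    case False
    hence "i = (n - 2) + 1" using i n6 by simp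
    moreover have "(n-2) + 1 < n" using n6 by simp
    ultimately show ?thesis using claim[of "n-2"] by simp
  qed
qed

lemma fixV1:
  assumes t: "t \<in> CC" and hU: "\<And>i. i < n \<Longrightarrow> t (U,i,odd i) = (U,i,odd i)" and i: "i < n"
  shows "t (V,i,\<not> odd i) = (V,i,\<not> odd i)"
proof -
  have "{(U,i,odd i),(V,i,\<not> odd i)} \<in> SE" using SE_mem i by blast
  hence "{t (U,i,odd i), t (V,i,\<not> odd i)} \<in> SE" using presS[OF t] i by simp
  hence "{(U,i,odd i), t (V,i,\<not> odd i)} \<in> SE" using hU[OF i] by simp
  thus ?thesis using nbrSU i by blast
qed

lemma ar1: "i < n \<Longrightarrow> ((i+k) mod n + n - k) mod n = i" using kn by (auto simp: mod2)
lemma ar2: "i < n \<Longrightarrow> ((i+n-k) mod n + k) mod n = i" using kn by (auto simp: mod2)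
lemma ar3: "i < n \<Longrightarrow> ((i+k) mod n + k) mod n = (i+2*k) mod n"
proof -
  have "((i+k) mod n + k) mod n = (i+k+k) mod n" by (rule mod_add_left_eq)
  moreover have "i+k+k = i+2*k" by simp
  ultimately show ?thesis by metis
qed

lemma dvd_lt2: assumes "(m::nat) dvd d" "0 < d" "d < 2*m" shows "d = m"
proof -
  obtain q where q: "d = m * q" using assms(1) by (rule dvdE)
  have "q \<noteq> 0" using q assms(2) by auto
  moreover have "q < 2" using q assms(3) by (metis mult_less_cancel1 mult.commute nat_mult_less_cancel_disj) 
  ultimately have "q = 1" by linarith
  thus ?thesis using q by simp
qed

lemma ar4: assumes i: "i < n" and h: "((i+k) mod n + k) mod n = ((i+n-k) mod n + n - k) mod n"
  shows "n = 4*k"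
proof -
  have e1: "((i+k) mod n + k) mod n = (i+2*k) mod n" using ar3[OF i] .
  have "((i+n-k) mod n + n - k) = ((i+n-k) mod n + (n - k))" using kn by simp
  hence e2: "((i+n-k) mod n + n - k) mod n = (i+n-k+(n-k)) mod n" by (simp add: mod_add_left_eq)
  have h2: "(i+n-k+(n-k)) mod n = (i+2*k) mod n" using h e1 e2 by simp
  have le: "i+2*k \<le> i+n-k+(n-k)" using kn by linarith
  have "n dvd (i+n-k+(n-k)) - (i+2*k)" using mod_eq_dvd_iff_nat[OF le] h2 by simp
  moreover have "(i+n-k+(n-k)) - (i+2*k) = 2*n - 4*k" using kn by linarith
  ultimately have "n dvd 2*n - 4*k" by simp
  hence "2*n - 4*k = n" by (rule dvd_lt2) (use kn k1 in linarith)+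
  thus ?thesis using kn by linarith
qed

lemma ar6: assumes n4: "n = 4*k" and m: "m + 1 < n"
  shows "(m+1+2*k) mod n \<noteq> m+1 \<and> (m+1+2*k) mod n \<noteq> (m+n-1) mod n"
proof (intro conjI notI)
  assume h: "(m+1+2*k) mod n = m+1"
  have "(m+1+2*k) mod n = (m+1) mod n" using h mod_less[OF m] by metis
  hence "n dvd (m+1+2*k) - (m+1)" using mod_eq_dvd_iff_nat[of "m+1" "m+1+2*k" n] by linarith
  hence "n dvd 2*k" by simp
  thus False using nat_dvd_not_less[of "2*k" n] kn k1 by linarith
next
  assume h: "(m+1+2*k) mod n = (m+n-1) mod n"
  have le: "m+1+2*k \<le> m+n-1" using n4 k2 by linarith
  have "(m+n-1) mod n = (m+1+2*k) mod n" using h by (rule sym)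
  hence "n dvd (m+n-1) - (m+1+2*k)" using mod_eq_dvd_iff_nat[OF le] by blast
  moreover have "(m+n-1) - (m+1+2*k) = 2*k - 2" using n4 k2 by linarith
  ultimately have "n dvd 2*k - 2" by simp
  thus False using nat_dvd_not_less[of "2*k - 2" n] kn k2 by linarith
qed

lemma fixV0_or:
  assumes t: "t \<in> CC" and hV: "\<And>i. i < n \<Longrightarrow> t (V,i,\<not> odd i) = (V,i,\<not> odd i)" and i: "i < n"
  shows "t (V,i,odd i) = (V,i,odd i) \<or> (n = 4*k \<and> t (V,i,odd i) = (V,(i+2*k) mod n, odd i))"
proof -
  define p where "p = (i+k) mod n"
  define q where "q = (i+n-k) mod n"
  have pq: "p < n" "q < n" using npos by (auto simp: p_def q_def)
  have op: "odd p = odd i" "odd q = odd i" using ev_k ev_n kn unfolding p_def q_def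
    by (auto simp: par_mod)
  have tp: "t (V,p,\<not> odd i) = (V,p,\<not> odd i)" using hV[OF pq(1)] op by simp
  have tq: "t (V,q,\<not> odd i) = (V,q,\<not> odd i)" using hV[OF pq(2)] op by simp
  have "{(V,i,odd i),(V,p,\<not> odd i)} \<in> IE" unfolding p_def using IE_mem i by blast
  hence "{t (V,i,odd i),(V,p,\<not> odd i)} \<in> IE" using presI[OF t, of "(V,i,odd i)" "(V,p,\<not> odd i)"] i pq tp by simp
  hence "{(V,p,\<not> odd i), t (V,i,odd i)} \<in> IE" by (simp add: insert_commute)
  hence A: "t (V,i,odd i) = (V,(p+k) mod n, odd i) \<or> t (V,i,odd i) = (V,(p+n-k) mod n, odd i)"
    using nbrI[OF pq(1)] by simp
  have "{(V,i,odd i),(V,q,\<not> odd i)} \<in> IE" unfolding q_def using nbrI i by blast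
  hence "{t (V,i,odd i),(V,q,\<not> odd i)} \<in> IE" using presI[OF t, of "(V,i,odd i)" "(V,q,\<not> odd i)"] i pq tq by simp
  hence "{(V,q,\<not> odd i), t (V,i,odd i)} \<in> IE" by (simp add: insert_commute)
  hence B: "t (V,i,odd i) = (V,(q+k) mod n, odd i) \<or> t (V,i,odd i) = (V,(q+n-k) mod n, odd i)"
    using nbrI[OF pq(2)] by simp
  have e1: "(p+n-k) mod n = i" "(q+k) mod n = i" "(p+k) mod n = (i+2*k) mod n"
    unfolding p_def q_def using ar1 ar2 ar3 i by auto
  have e2: "(p+k) mod n = (q+n-k) mod n \<Longrightarrow> n = 4*k" unfolding p_def q_def using ar4 i by blast
  from A B e1 e2 show ?thesis by auto
qed

lemma allfix:
  assumes t: "t \<in> CC" and hU: "\<And>i. i < n \<Longrightarrow> t (U,i,odd i) = (U,i,odd i)"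
    and hV0: "\<And>i. i < n \<Longrightarrow> t (V,i,odd i) = (V,i,odd i)"
  shows "t = \<one>\<^bsub>GG\<^esub>"
proof -
  have hV1: "\<And>i. i < n \<Longrightarrow> t (V,i,\<not> odd i) = (V,i,\<not> odd i)" using fixV1[OF t hU] by blast
  have hU1: "t (U,i,\<not> odd i) = (U,i,\<not> odd i)" if i: "i < n" for i
  proof -
    have "{(V,i,odd i),(U,i,\<not> odd i)} \<in> SE" using SE_mem' i by blast
    hence "{t (V,i,odd i), t (U,i,\<not> odd i)} \<in> SE" using presS[OF t] i by simp
    hence "{(V,i,odd i), t (U,i,\<not> odd i)} \<in> SE" using hV0[OF i] by simp
    thus ?thesis using nbrSV i by blast
  qed
  have all: "t x = x" if x: "x \<in> VV" for x
  proof -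
    obtain s i j where xe: "x = (s,i,j)" by (cases x) auto
    hence i: "i < n" using x by simp
    show ?thesis
    proof (cases s)
      case U thus ?thesis using xe hU[OF i] hU1[OF i] by (cases "j = odd i") auto
    next
      case V thus ?thesis using xe hV0[OF i] hV1[OF i] by (cases "j = odd i") auto
    qed
  qed
  show ?thesis
  proof
    fix x show "t x = \<one>\<^bsub>GG\<^esub> x"
      using all Bij_ext[OF CB[OF t]] oneG by (cases "x \<in> VV") auto
  qed
qed

lemma rigid_not4k:
  assumes "n \<noteq> 4*k" and t: "t \<in> CC" and f0: "t (U,0,False) = (U,0,False)" and f1: "t (U,1,True) = (U,1,True)"
  shows "t = \<one>\<^bsub>GG\<^esub>"
proof -
  have hU: "\<And>i. i < n \<Longrightarrow> t (U,i,odd i) = (U,i,odd i)" using fixU0[OF t f0 f1] by blast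
  have hV1: "\<And>i. i < n \<Longrightarrow> t (V,i,\<not> odd i) = (V,i,\<not> odd i)" using fixV1[OF t hU] by blast
  have "\<And>i. i < n \<Longrightarrow> t (V,i,odd i) = (V,i,odd i)" using fixV0_or[OF t hV1] assms(1) by blast
  thus ?thesis using allfix[OF t hU] by blast
qed


end

context dgp begin
lemma rigid_4k_fix:
  assumes n4: "n = 4*k" and t: "t \<in> CC" and f0: "t (U,0,False) = (U,0,False)" and f1: "t (U,1,True) = (U,1,True)"
    and fV: "t (V,0,False) = (V,0,False)"
  shows "t = \<one>\<^bsub>GG\<^esub>"
proof -
  have hU: "\<And>i. i < n \<Longrightarrow> t (U,i,odd i) = (U,i,odd i)" using fixU0[OF t f0 f1] by blast
  have hV1: "\<And>i. i < n \<Longrightarrow> t (V,i,\<not> odd i) = (V,i,\<not> odd i)" using fixV1[OF t hU] by blast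
  have R3: "\<And>i. i < n \<Longrightarrow> t (V,i,odd i) = (V,i,odd i) \<or> t (V,i,odd i) = (V,(i+2*k) mod n, odd i)"
    using fixV0_or[OF t hV1] by blast
  have c1: "i < n \<Longrightarrow> t (U,i,\<not> odd i) = (U,i,\<not> odd i)" for i
  proof (induction i)
    case 0
    have "{(V,0,False),(U,0,True)} \<in> SE" using SE_mem'[of 0 False] npos by simp
    hence "{t (V,0,False), t (U,0,True)} \<in> SE" using presS[OF t] npos by simp
    hence "{(V,0,False), t (U,0,True)} \<in> SE" using fV by simp
    thus ?case using nbrSV[of 0 False] npos by simp
  next
    case (Suc m)
    have m1: "m + 1 < n" using Suc.prems by simp
    have IH: "t (U,m,\<not> odd m) = (U,m,\<not> odd m)" using Suc m1 by simp
    define w where "w = (U,m,\<not> odd m)"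
    define y where "y = (U,m+1,odd m)"
    define z where "z = (V,m+1,\<not> odd m)"
    have VV: "w \<in> VV" "y \<in> VV" "z \<in> VV" using m1 by (auto simp: w_def y_def z_def)
    have "{w, (U,(m+1) mod n, \<not>\<not> odd m)} \<in> OE" unfolding w_def by (rule OE_mem) (use m1 in simp)
    hence "{w, y} \<in> OE" using m1 by (simp add: y_def)
    hence "{t w, t y} \<in> OE" using presO[OF t VV(1,2)] by simp
    hence "{w, t y} \<in> OE" using IH w_def by simp
    hence O: "t y = (U,(m+1) mod n, odd m) \<or> t y = (U,(m+n-1) mod n, odd m)"
      unfolding w_def using nbrO m1 by simp
    have "{y, z} \<in> SE" unfolding y_def z_def using SE_mem m1 by blast
    hence "{t y, t z} \<in> SE" using presS[OF t VV(2,3)] by simp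
    hence tyz: "{t z, t y} \<in> SE" by (simp add: insert_commute)
    have "t z = z \<or> t z = (V,(m+1+2*k) mod n, \<not> odd m)" using R3[OF m1] by (simp add: z_def)
    hence "t y = y \<or> t y = (U,(m+1+2*k) mod n, odd m)"
    proof
      assume "t z = z" thus ?thesis using tyz nbrSV m1 by (simp add: z_def y_def)
    next
      assume "t z = (V,(m+1+2*k) mod n, \<not> odd m)" thus ?thesis using tyz nbrSV npos by simp
    qed
    hence "t y = y" using O ar6[OF n4 m1] m1 by (auto simp: y_def)
    thus ?case by (simp add: y_def)
  qed
  have "\<And>i. i < n \<Longrightarrow> t (V,i,odd i) = (V,i,odd i)"
  proof -
    fix i assume i: "i < n"
    have "{(U,i,\<not> odd i),(V,i,\<not>\<not> odd i)} \<in> SE" using SE_mem[of i "\<not> odd i"] i by blast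
    hence "{(U,i,\<not> odd i),(V,i,odd i)} \<in> SE" by (simp only: not_not)
    hence "{t (U,i,\<not> odd i), t (V,i,odd i)} \<in> SE" using presS[OF t, of "(U,i,\<not> odd i)" "(V,i,odd i)"] i by simp
    hence "{(U,i,\<not> odd i), t (V,i,odd i)} \<in> SE" using c1[OF i] by simp
    hence "t (V,i,odd i) = (V,i,\<not>\<not> odd i)" using nbrSU[OF i] by blast
    thus "t (V,i,odd i) = (V,i,odd i)" by (simp only: not_not)
  qed
  thus ?thesis using allfix[OF t hU] by blast
qed


lemma VV_split: "(\<forall>x\<in>VV. P x) \<longleftrightarrow> (\<forall>s i j. i < n \<longrightarrow> P (s,i,j))"
  by (auto simp: verts_def)

lemma par1: "odd ((i+1) mod n) = (\<not> odd i)" by (simp add: par_mod)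
lemma park: "odd ((i+k) mod n) = odd i" using ev_k by (simp add: par_mod)
lemma par2k: "odd ((i+2*k) mod n) = odd i" by (simp add: par_mod)

lemma th_U: "i < n \<Longrightarrow> theta n k (U,i,j) = (if odd i \<noteq> j then (U,(i+2*k) mod n, j) else (U,i,j))"
  by (cases j) (auto simp: theta_def)
lemma th_V: "i < n \<Longrightarrow> theta n k (V,i,j) = (if odd i \<noteq> j then (V,i,j) else (V,(i+2*k) mod n, j))"
  by (cases j) (auto simp: theta_def)

lemma ar7: assumes "n = 4*k" "i < n" shows "((i+2*k) mod n + 2*k) mod n = i"
proof -
  have "((i+2*k) mod n + 2*k) mod n = (i+2*k+2*k) mod n" by (rule mod_add_left_eq)
  also have "i+2*k+2*k = i + n" using assms by simp
  finally show ?thesis using assms by simp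
qed

lemma ar8: "((i+1) mod n + 2*k) mod n = ((i+2*k) mod n + 1) mod n"
proof -
  have "((i+1) mod n + 2*k) mod n = (i+1+2*k) mod n" by (rule mod_add_left_eq)
  moreover have "((i+2*k) mod n + 1) mod n = (i+2*k+1) mod n" by (rule mod_add_left_eq)
  moreover have "i+1+2*k = i+2*k+1" by simp
  ultimately show ?thesis by metis
qed

lemma ar9: assumes "n = 4*k" "i < n" shows "(((i+k) mod n + 2*k) mod n + k) mod n = i"
proof -
  have "(((i+k) mod n + 2*k) mod n + k) mod n = ((i+k) mod n + 2*k + k) mod n" by (rule mod_add_left_eq)
  also have "\<dots> = (i+k + 2*k + k) mod n" by (metis mod_add_left_eq)
  also have "i+k+2*k+k = i + n" using assms by simp
  finally show ?thesis using assms by simp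
qed

lemma thB: assumes n4: "n = 4*k" shows "theta n k \<in> Bij VV"
proof (rule BijI[where g = "theta n k"])
  show "theta n k \<in> extensional VV" by (simp add: theta_def)
  have inV: "\<forall>x\<in>VV. theta n k x \<in> VV" unfolding VV_split
  proof (intro allI impI)
    fix s i j assume i: "(i::nat) < n"
    show "theta n k (s,i,j) \<in> VV" using i npos by (cases s) (auto simp: th_U th_V)
  qed
  thus "\<And>x. x \<in> VV \<Longrightarrow> theta n k x \<in> VV" "\<And>x. x \<in> VV \<Longrightarrow> theta n k x \<in> VV" by auto
  have "\<forall>x\<in>VV. theta n k (theta n k x) = x" unfolding VV_split
  proof (intro allI impI)
    fix s i j assume i: "(i::nat) < n"
    have m: "(i+2*k) mod n < n" using npos by simp
    show "theta n k (theta n k (s,i,j)) = (s,i,j)"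
      using i m ar7[OF n4 i] par2k[of i] by (cases s) (auto simp: th_U th_V)
  qed
  thus "\<And>x. x \<in> VV \<Longrightarrow> theta n k (theta n k x) = x" "\<And>x. x \<in> VV \<Longrightarrow> theta n k (theta n k x) = x" by auto
qed

lemma thC: assumes n4: "n = 4*k" shows "theta n k \<in> CC"
proof (rule CI[OF thB[OF n4]])
  show "\<forall>e\<in>OE. theta n k ` e \<in> OE"
  proof
    fix e assume "e \<in> OE"
    then obtain i j where e: "e = {(U,i,j),(U,(i+1) mod n,\<not>j)}" and i: "i < n"
      unfolding outer_edges_def by blast
    have i1: "(i+1) mod n < n" using npos by simp
    show "theta n k ` e \<in> OE"
    proof (cases "odd i \<noteq> j")
      case True
      have "theta n k ` e = {(U,(i+2*k) mod n, j), (U,((i+1) mod n + 2*k) mod n, \<not>j)}"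
        using True i i1 par1[of i] by (auto simp: e th_U)
      moreover have "{(U,(i+2*k) mod n, j), (U,((i+1) mod n + 2*k) mod n, \<not>j)} \<in> OE"
        by (rule inO, simp add: npos, simp add: npos, rule disjI1, rule ar8)
      ultimately show ?thesis by simp
    next
      case False
      have "theta n k ` e = e"
        using False i i1 par1[of i] by (auto simp: e th_U)
      thus ?thesis using \<open>e \<in> OE\<close> by simp
    qed
  qed
  show "\<forall>e\<in>IE. theta n k ` e \<in> IE"
  proof
    fix e assume "e \<in> IE"
    then obtain i j where e: "e = {(V,i,j),(V,(i+k) mod n,\<not>j)}" and i: "i < n"
      unfolding inner_edges_def by blast
    have i1: "(i+k) mod n < n" using npos by simp
    show "theta n k ` e \<in> IE"
    proof (cases "odd i \<noteq> j")
      case True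
      have "theta n k ` e = {(V,i, j), (V,((i+k) mod n + 2*k) mod n, \<not>j)}"
        using True i i1 park[of i] by (auto simp: e th_V)
      moreover have "{(V,i, j), (V,((i+k) mod n + 2*k) mod n, \<not>j)} \<in> IE"
        by (rule inI) (use ar9[OF n4 i] i npos in auto)
      ultimately show ?thesis by simp
    next
      case False
      have "theta n k ` e = {(V,(i+2*k) mod n, j), (V,(i+k) mod n, \<not>j)}"
        using False i i1 park[of i] by (auto simp: e th_V)
      moreover have "{(V,(i+2*k) mod n, j), (V,(i+k) mod n, \<not>j)} \<in> IE"
        by (rule inI) (use ar3[OF i] i npos in auto)
      ultimately show ?thesis by simp
    qed
  qed
  show "\<forall>e\<in>SE. theta n k ` e \<in> SE"
  proof
    fix e assume "e \<in> SE"
    then obtain i j where e: "e = {(U,i,j),(V,i,\<not>j)}" and i: "i < n"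
      unfolding spoke_edges_def by blast
    show "theta n k ` e \<in> SE"
    proof (cases "odd i \<noteq> j")
      case True
      have "theta n k ` e = {(U,(i+2*k) mod n, j), (V,(i+2*k) mod n, \<not>j)}"
        using True i by (auto simp: e th_U th_V)
      moreover have "{(U,(i+2*k) mod n, j), (V,(i+2*k) mod n, \<not>j)} \<in> SE"
        by (rule SE_mem) (simp add: npos)
      ultimately show ?thesis by simp
    next
      case False
      have "theta n k ` e = e"
        using False i by (auto simp: e th_U th_V)
      thus ?thesis using \<open>e \<in> SE\<close> by simp
    qed
  qed
qed

lemma thth: assumes n4: "n = 4*k" shows "theta n k \<otimes>\<^bsub>GG\<^esub> theta n k = \<one>\<^bsub>GG\<^esub>"
proof -
  have B: "theta n k \<in> Bij VV" by (rule thB[OF n4])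
  have "\<forall>x\<in>VV. theta n k (theta n k x) = x" unfolding VV_split
  proof (intro allI impI)
    fix s i j assume i: "(i::nat) < n"
    have m: "(i+2*k) mod n < n" using npos by simp
    show "theta n k (theta n k (s,i,j)) = (s,i,j)"
      using i m ar7[OF n4 i] par2k[of i] by (cases s) (auto simp: th_U th_V)
  qed
  show ?thesis unfolding multG[OF B B] oneG
  proof
    fix x show "compose VV (theta n k) (theta n k) x = (\<lambda>x\<in>VV. x) x"
      using \<open>\<forall>x\<in>VV. _\<close> by (cases "x \<in> VV") (auto simp: compose_def)
  qed
qed

lemma rigid:
  assumes t: "t \<in> CC" and f0: "t (U,0,False) = (U,0,False)" and f1: "t (U,1,True) = (U,1,True)"
  shows "t = \<one>\<^bsub>GG\<^esub> \<or> (n = 4*k \<and> t = theta n k)"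
proof (cases "n = 4*k")
  case False thus ?thesis using rigid_not4k[OF False t f0 f1] by simp
next
  case n4: True
  interpret G: group GG by (rule grpG)
  have hU: "\<And>i. i < n \<Longrightarrow> t (U,i,odd i) = (U,i,odd i)" using fixU0[OF t f0 f1] by blast
  have hV1: "\<And>i. i < n \<Longrightarrow> t (V,i,\<not> odd i) = (V,i,\<not> odd i)" using fixV1[OF t hU] by blast
  have "t (V,0,odd (0::nat)) = (V,0,odd (0::nat)) \<or> (n = 4*k \<and> t (V,0,odd (0::nat)) = (V,(0+2*k) mod n, odd (0::nat)))"
    by (rule fixV0_or[OF t hV1 npos])
  hence "t (V,0,False) = (V,0,False) \<or> t (V,0,False) = (V,2*k,False)" using kn by auto
  thus ?thesis
  proof
    assume "t (V,0,False) = (V,0,False)"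
    thus ?thesis using rigid_4k_fix[OF n4 t f0 f1] by simp
  next
    assume tv: "t (V,0,False) = (V,2*k,False)"
    have thc: "theta n k \<in> CC" by (rule thC[OF n4])
    have tc: "t \<in> carrier GG" "theta n k \<in> carrier GG" using t thc by (auto simp: Cnk_def)
    define t' where "t' = theta n k \<otimes>\<^bsub>GG\<^esub> t"
    have t'C: "t' \<in> CC" unfolding t'_def using subgroup.m_closed[OF subC thc t] .
    have ap: "t' x = theta n k (t x)" if "x \<in> VV" for x
      unfolding t'_def multG[OF thB[OF n4] CB[OF t]] using that by (simp add: compose_eq)
    have th2: "theta n k (V,2*k,False) = (V,(2*k+2*k) mod n,False)" using kn by (simp add: th_V)
    have "(2*k+2*k) mod n = 0" using n4 by simp
    hence "theta n k (V,2*k,False) = (V,0,False)" using th2 by simp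
    moreover have "t' (V,0,False) = theta n k (V,2*k,False)" using ap[of "(V,0,False)"] tv npos by simp
    ultimately have "t' (V,0,False) = (V,0,False)" by simp
    moreover have "t' (U,0,False) = (U,0,False)" using ap[of "(U,0,False)"] f0 npos by (simp add: th_U)
    moreover have "t' (U,1,True) = (U,1,True)" using ap[of "(U,1,True)"] f1 n6 by (simp add: th_U)
    ultimately have "t' = \<one>\<^bsub>GG\<^esub>" using rigid_4k_fix[OF n4 t'C] by blast
    hence "t = inv\<^bsub>GG\<^esub> (theta n k) \<otimes>\<^bsub>GG\<^esub> \<one>\<^bsub>GG\<^esub>"
      using G.inv_solve_left[OF tc(1) tc(2) G.one_closed] unfolding t'_def by simp
    moreover have "theta n k = inv\<^bsub>GG\<^esub> (theta n k) \<otimes>\<^bsub>GG\<^esub> \<one>\<^bsub>GG\<^esub>"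
      using G.inv_solve_left[OF tc(2) tc(2) G.one_closed] thth[OF n4] by simp
    ultimately show ?thesis using n4 by simp
  qed
qed

end

context dgp begin

definition FF :: "nat \<Rightarrow> bool \<Rightarrow> bool \<Rightarrow> vert \<Rightarrow> vert" where
  "FF a e b = restrict (\<lambda>(s,i,j). (s, (a + (if e then n - i else i)) mod n, j \<noteq> b)) VV"

lemma FF_app: "i < n \<Longrightarrow> FF a e b (s,i,j) = (s, (a + (if e then n - i else i)) mod n, j \<noteq> b)"
  by (simp add: FF_def)
lemma rho_app: "i < n \<Longrightarrow> rho n (s,i,j) = (s, (i+1) mod n, j)" by (simp add: rho_def)
lemma delta_app: "i < n \<Longrightarrow> delta n (s,i,j) = (s, (n-i) mod n, j)" by (simp add: delta_def)
lemma beta_app: "i < n \<Longrightarrow> beta n (s,i,j) = (s, i, \<not>j)" by (simp add: beta_def)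

lemma ar10: assumes "i < n" shows "Suc ((n + i - Suc 0) mod n) mod n = i"
proof (cases i)
  case 0
  have "(n - Suc 0) mod n = n - 1" using npos by simp
  thus ?thesis using 0 npos by simp
next
  case (Suc m)
  have "(n + i - Suc 0) mod n = m" using Suc assms by simp
  thus ?thesis using Suc assms by simp
qed
lemma ar10': assumes "i < n" shows "(n + Suc i mod n - Suc 0) mod n = i"
proof (cases "Suc i = n")
  case True
  hence "Suc i mod n = 0" by simp
  thus ?thesis using True npos by simp
next
  case False
  hence "Suc i mod n = Suc i" using assms by simp
  thus ?thesis using assms by simp
qed
lemma ar11: "i < n \<Longrightarrow> (n - (n - i) mod n) mod n = i" using npos by (cases "i = 0") auto

lemma rhoB: "rho n \<in> Bij VV"
proof (rule BijI[where g = "FF (n-1) False False"])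
  show "rho n \<in> extensional VV" by (simp add: rho_def)
  have "\<forall>x\<in>VV. rho n x \<in> VV \<and> FF (n-1) False False x \<in> VV \<and> FF (n-1) False False (rho n x) = x \<and> rho n (FF (n-1) False False x) = x"
    unfolding VV_split using npos by (auto simp: rho_app FF_app ar10 ar10')
  thus "\<And>x. x \<in> VV \<Longrightarrow> rho n x \<in> VV" "\<And>x. x \<in> VV \<Longrightarrow> FF (n-1) False False x \<in> VV"
    "\<And>x. x \<in> VV \<Longrightarrow> FF (n-1) False False (rho n x) = x" "\<And>x. x \<in> VV \<Longrightarrow> rho n (FF (n-1) False False x) = x" by auto
qed

lemma deltaB: "delta n \<in> Bij VV"
proof (rule BijI[where g = "delta n"])
  show "delta n \<in> extensional VV" by (simp add: delta_def)
  have "\<forall>x\<in>VV. delta n x \<in> VV \<and> delta n (delta n x) = x"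
    unfolding VV_split using npos by (auto simp: delta_app ar11)
  thus "\<And>x. x \<in> VV \<Longrightarrow> delta n x \<in> VV" "\<And>x. x \<in> VV \<Longrightarrow> delta n x \<in> VV"
    "\<And>x. x \<in> VV \<Longrightarrow> delta n (delta n x) = x" "\<And>x. x \<in> VV \<Longrightarrow> delta n (delta n x) = x" by auto
qed

lemma betaB: "beta n \<in> Bij VV"
proof (rule BijI[where g = "beta n"])
  show "beta n \<in> extensional VV" by (simp add: beta_def)
  have "\<forall>x\<in>VV. beta n x \<in> VV \<and> beta n (beta n x) = x"
    unfolding VV_split by (auto simp: beta_app)
  thus "\<And>x. x \<in> VV \<Longrightarrow> beta n x \<in> VV" "\<And>x. x \<in> VV \<Longrightarrow> beta n x \<in> VV"
    "\<And>x. x \<in> VV \<Longrightarrow> beta n (beta n x) = x" "\<And>x. x \<in> VV \<Longrightarrow> beta n (beta n x) = x" by auto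
qed

lemma ar12: "i < n \<Longrightarrow> ((i+k) mod n + 1) mod n = ((i+1) mod n + k) mod n"
proof -
  have "((i+k) mod n + 1) mod n = (i+k+1) mod n" by (rule mod_add_left_eq)
  moreover have "((i+1) mod n + k) mod n = (i+1+k) mod n" by (rule mod_add_left_eq)
  moreover have "i+k+1 = i+1+k" by simp
  ultimately show ?thesis by metis
qed
lemma ar13: "i < n \<Longrightarrow> (n - i) mod n = ((n - (i+1) mod n) mod n + 1) mod n"
  using npos by (auto simp: mod2)
lemma ar14: "i < n \<Longrightarrow> (n - i) mod n = ((n - (i+k) mod n) mod n + k) mod n"
  using kn by (auto simp: mod2)

lemma rhoC: "rho n \<in> CC"
proof (rule CI[OF rhoB])
  show "\<forall>e\<in>OE. rho n ` e \<in> OE"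
  proof
    fix e assume "e \<in> OE"
    then obtain i j where e: "e = {(U,i,j),(U,(i+1) mod n,\<not>j)}" and i: "i < n"
      unfolding outer_edges_def by blast
    have "rho n ` e = {(U,(i+1) mod n,j),(U,((i+1) mod n+1) mod n,\<not>j)}"
      using i npos by (simp add: e rho_app)
    thus "rho n ` e \<in> OE" using OE_mem[of "(i+1) mod n" j] npos by simp
  qed
  show "\<forall>e\<in>IE. rho n ` e \<in> IE"
  proof
    fix e assume "e \<in> IE"
    then obtain i j where e: "e = {(V,i,j),(V,(i+k) mod n,\<not>j)}" and i: "i < n"
      unfolding inner_edges_def by blast
    have "rho n ` e = {(V,(i+1) mod n,j),(V,((i+k) mod n+1) mod n,\<not>j)}"
      using i npos by (simp add: e rho_app)
    moreover have "{(V,(i+1) mod n,j),(V,((i+k) mod n+1) mod n,\<not>j)} \<in> IE"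
      by (rule inI, simp add: npos, simp add: npos, rule disjI1, rule ar12[OF i])
    ultimately show "rho n ` e \<in> IE" by simp
  qed
  show "\<forall>e\<in>SE. rho n ` e \<in> SE"
  proof
    fix e assume "e \<in> SE"
    then obtain i j where e: "e = {(U,i,j),(V,i,\<not>j)}" and i: "i < n"
      unfolding spoke_edges_def by blast
    have "rho n ` e = {(U,(i+1) mod n,j),(V,(i+1) mod n,\<not>j)}"
      using i by (simp add: e rho_app)
    thus "rho n ` e \<in> SE" using SE_mem[of "(i+1) mod n" j] npos by simp
  qed
qed

lemma deltaC: "delta n \<in> CC"
proof (rule CI[OF deltaB])
  show "\<forall>e\<in>OE. delta n ` e \<in> OE"
  proof
    fix e assume "e \<in> OE"
    then obtain i j where e: "e = {(U,i,j),(U,(i+1) mod n,\<not>j)}" and i: "i < n"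
      unfolding outer_edges_def by blast
    have "delta n ` e = {(U,(n-i) mod n,j),(U,(n - (i+1) mod n) mod n,\<not>j)}"
      using i npos by (simp add: e delta_app)
    moreover have "{(U,(n-i) mod n,j),(U,(n - (i+1) mod n) mod n,\<not>j)} \<in> OE"
      by (rule inO, simp add: npos, simp add: npos, rule disjI2, rule ar13[OF i])
    ultimately show "delta n ` e \<in> OE" by simp
  qed
  show "\<forall>e\<in>IE. delta n ` e \<in> IE"
  proof
    fix e assume "e \<in> IE"
    then obtain i j where e: "e = {(V,i,j),(V,(i+k) mod n,\<not>j)}" and i: "i < n"
      unfolding inner_edges_def by blast
    have "delta n ` e = {(V,(n-i) mod n,j),(V,(n - (i+k) mod n) mod n,\<not>j)}"
      using i npos by (simp add: e delta_app)
    moreover have "{(V,(n-i) mod n,j),(V,(n - (i+k) mod n) mod n,\<not>j)} \<in> IE"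
      by (rule inI, simp add: npos, simp add: npos, rule disjI2, rule ar14[OF i])
    ultimately show "delta n ` e \<in> IE" by simp
  qed
  show "\<forall>e\<in>SE. delta n ` e \<in> SE"
  proof
    fix e assume "e \<in> SE"
    then obtain i j where e: "e = {(U,i,j),(V,i,\<not>j)}" and i: "i < n"
      unfolding spoke_edges_def by blast
    have "delta n ` e = {(U,(n-i) mod n,j),(V,(n-i) mod n,\<not>j)}"
      using i by (simp add: e delta_app)
    thus "delta n ` e \<in> SE" using SE_mem[of "(n-i) mod n" j] npos by simp
  qed
qed

lemma betaC: "beta n \<in> CC"
proof (rule CI[OF betaB])
  show "\<forall>e\<in>OE. beta n ` e \<in> OE"
  proof
    fix e assume "e \<in> OE"
    then obtain i j where e: "e = {(U,i,j),(U,(i+1) mod n,\<not>j)}" and i: "i < n"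
      unfolding outer_edges_def by blast
    have "beta n ` e = {(U,i,\<not>j),(U,(i+1) mod n,\<not>\<not>j)}"
      using i npos by (simp add: e beta_app)
    thus "beta n ` e \<in> OE" using OE_mem[OF i, of "\<not>j"] by simp
  qed
  show "\<forall>e\<in>IE. beta n ` e \<in> IE"
  proof
    fix e assume "e \<in> IE"
    then obtain i j where e: "e = {(V,i,j),(V,(i+k) mod n,\<not>j)}" and i: "i < n"
      unfolding inner_edges_def by blast
    have "beta n ` e = {(V,i,\<not>j),(V,(i+k) mod n,\<not>\<not>j)}"
      using i npos by (simp add: e beta_app)
    thus "beta n ` e \<in> IE" using IE_mem[OF i, of "\<not>j"] by simp
  qed
  show "\<forall>e\<in>SE. beta n ` e \<in> SE"
  proof
    fix e assume "e \<in> SE"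
    then obtain i j where e: "e = {(U,i,j),(V,i,\<not>j)}" and i: "i < n"
      unfolding spoke_edges_def by blast
    have "beta n ` e = {(U,i,\<not>j),(V,i,\<not>\<not>j)}"
      using i by (simp add: e beta_app)
    thus "beta n ` e \<in> SE" using SE_mem[OF i, of "\<not>j"] by simp
  qed
qed

abbreviation "gen3 \<equiv> generate GG {rho n, delta n, beta n}"

lemma gens_carr: "{rho n, delta n, beta n} \<subseteq> carrier GG"
  using rhoB deltaB betaB carrG by auto

lemma gen3_carr: "x \<in> gen3 \<Longrightarrow> x \<in> Bij VV"
  using group.generate_in_carrier[OF grpG gens_carr] carrG by auto

lemma gen3_C: "gen3 \<subseteq> CC"
  by (rule group.generate_subgroup_incl[OF grpG _ subC]) (use rhoC deltaC betaC in auto)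

lemma fun_eqI_VV: assumes "f \<in> extensional VV" "g \<in> extensional VV" "\<forall>x\<in>VV. f x = g x"
  shows "f = g"
  by (rule extensionalityI[OF assms(1,2)]) (use assms(3) in blast)

lemma FF_ext: "FF a e b \<in> extensional VV" by (simp add: FF_def)

lemma FF_gen: "FF a e b \<in> gen3"
proof -
  have F0: "FF a e False \<in> gen3" for e
  proof (induction a)
    case 0
    show ?case
    proof (cases e)
      case False
      have "FF 0 e False = \<one>\<^bsub>GG\<^esub>" unfolding oneG
        by (rule fun_eqI_VV[OF FF_ext]) (auto simp: VV_split FF_app False)
      thus ?thesis using generate.one by metis
    next
      case True
      have "FF 0 e False = delta n"
        by (rule fun_eqI_VV[OF FF_ext]) (auto simp: VV_split FF_app delta_app True delta_def)
      thus ?thesis by (auto intro: generate.incl)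
    qed
  next
    case (Suc a)
    have B: "FF a e False \<in> Bij VV" using gen3_carr[OF Suc.IH] .
    have "FF (Suc a) e False = rho n \<otimes>\<^bsub>GG\<^esub> FF a e False"
      unfolding multG[OF rhoB B]
      by (rule fun_eqI_VV[OF FF_ext]) (auto simp: VV_split FF_app rho_app compose_eq mod_Suc_eq)
    moreover have "rho n \<in> gen3" by (auto intro: generate.incl)
    ultimately show ?case using generate.eng[OF _ Suc.IH] by metis
  qed
  show ?thesis
  proof (cases b)
    case False thus ?thesis using F0 by simp
  next
    case True
    have B: "FF a e False \<in> Bij VV" using gen3_carr[OF F0] .
    have "FF a e True = beta n \<otimes>\<^bsub>GG\<^esub> FF a e False"
      unfolding multG[OF betaB B]
      by (rule fun_eqI_VV[OF FF_ext]) (auto simp: VV_split FF_app beta_app compose_eq)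
    moreover have "beta n \<in> gen3" by (auto intro: generate.incl)
    ultimately show ?thesis using generate.eng[OF _ F0] True by metis
  qed
qed

end

context dgp begin

lemma CC_form:
  assumes sC: "\<sigma> \<in> CC"
  shows "\<exists>a<n. \<exists>e b. \<sigma> = FF a e b \<or> (n = 4*k \<and> \<sigma> = FF a e b \<otimes>\<^bsub>GG\<^esub> theta n k)"
proof -
  interpret G: group GG by (rule grpG)
  obtain a b where ab: "\<sigma> (U,0,False) = (U,a,b)" "a < n" using sideU[OF sC npos] by blast
  have "{(U,0,False),(U,(0+1) mod n,\<not>False)} \<in> OE" using OE_mem[of 0 False] npos by blast
  hence "{(U,0,False),(U,1,True)} \<in> OE" using n6 by simp
  hence "{\<sigma> (U,0,False), \<sigma> (U,1,True)} \<in> OE" using presO[OF sC] npos n6 by simp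
  hence "{(U,a,b), \<sigma> (U,1,True)} \<in> OE" using ab by simp
  hence s1: "\<sigma> (U,1,True) = (U,(a+1) mod n,\<not>b) \<or> \<sigma> (U,1,True) = (U,(a+n-1) mod n,\<not>b)"
    using nbrO[OF ab(2)] by simp
  define e where "e = (\<sigma> (U,1,True) \<noteq> (U,(a+1) mod n,\<not>b))"
  define g where "g = FF a e b"
  have g0: "g (U,0,False) = \<sigma> (U,0,False)" using ab npos by (cases e) (simp_all add: g_def FF_app)
  have g1: "g (U,1,True) = \<sigma> (U,1,True)"
  proof (cases e)
    case True
    hence "\<sigma> (U,1,True) = (U,(a+n-1) mod n,\<not>b)" using s1 e_def by auto
    moreover have "a + (n - 1) = a + n - 1" using npos by simp
    ultimately show ?thesis using True n6 by (simp add: g_def FF_app)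
  next
    case False
    thus ?thesis using n6 e_def by (simp add: g_def FF_app)
  qed
  have gC: "g \<in> CC" unfolding g_def using gen3_C FF_gen by blast
  define \<tau> where "\<tau> = inv\<^bsub>GG\<^esub> g \<otimes>\<^bsub>GG\<^esub> \<sigma>"
  have tC: "\<tau> \<in> CC" unfolding \<tau>_def
    using subgroup.m_closed[OF subC subgroup.m_inv_closed[OF subC gC] sC] .
  have carr: "g \<in> carrier GG" "\<sigma> \<in> carrier GG" "\<tau> \<in> carrier GG" using gC sC tC by (auto simp: Cnk_def)
  have sg: "\<sigma> = g \<otimes>\<^bsub>GG\<^esub> \<tau>" using G.inv_solve_left[OF carr(3) carr(1) carr(2)] \<tau>_def by simp
  have fx: "\<tau> x = x" if x: "x \<in> VV" and gx: "g x = \<sigma> x" for x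
  proof -
    have "\<sigma> x = g (\<tau> x)" using sg multG[OF CB[OF gC] CB[OF tC]] x by (simp add: compose_eq)
    hence "g (\<tau> x) = g x" using gx by simp
    thus ?thesis using inj_C[OF gC Bij_in[OF CB[OF tC] x] x] by simp
  qed
  have "\<tau> (U,0,False) = (U,0,False)" using fx[OF _ g0] npos by simp
  moreover have "\<tau> (U,1,True) = (U,1,True)" using fx[OF _ g1] n6 by simp
  ultimately have "\<tau> = \<one>\<^bsub>GG\<^esub> \<or> (n = 4*k \<and> \<tau> = theta n k)" using rigid[OF tC] by blast
  thus ?thesis
  proof
    assume "\<tau> = \<one>\<^bsub>GG\<^esub>"
    hence "\<sigma> = g" using sg carr by simp
    thus ?thesis using ab(2) g_def by blast
  next
    assume "n = 4*k \<and> \<tau> = theta n k"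
    thus ?thesis using sg ab(2) g_def by blast
  qed
qed

lemma C_eq3: assumes "n \<noteq> 4*k" shows "CC = gen3"
proof
  show "gen3 \<subseteq> CC" by (rule gen3_C)
  show "CC \<subseteq> gen3"
  proof
    fix \<sigma> assume "\<sigma> \<in> CC"
    then obtain a e b where "\<sigma> = FF a e b" using CC_form assms by blast
    thus "\<sigma> \<in> gen3" using FF_gen by simp
  qed
qed

lemma C_eq4: assumes n4: "n = 4*k" shows "CC = generate GG {rho n, delta n, beta n, theta n k}"
proof
  show "generate GG {rho n, delta n, beta n, theta n k} \<subseteq> CC"
    by (rule group.generate_subgroup_incl[OF grpG _ subC]) (use rhoC deltaC betaC thC[OF n4] in auto)
  show "CC \<subseteq> generate GG {rho n, delta n, beta n, theta n k}"
  proof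
    fix \<sigma> assume "\<sigma> \<in> CC"
    then obtain a e b where h: "\<sigma> = FF a e b \<or> \<sigma> = FF a e b \<otimes>\<^bsub>GG\<^esub> theta n k" using CC_form by blast
    have "FF a e b \<in> generate GG {rho n, delta n, beta n, theta n k}"
      using group.mono_generate[OF grpG, of "{rho n, delta n, beta n}" "{rho n, delta n, beta n, theta n k}"] FF_gen
      by blast
    moreover have "theta n k \<in> generate GG {rho n, delta n, beta n, theta n k}" by (auto intro: generate.incl)
    ultimately show "\<sigma> \<in> generate GG {rho n, delta n, beta n, theta n k}"
      using h generate.eng by metis
  qed
qed

end

context dgp begin

abbreviation "NN \<equiv> {..<n}"
abbreviation "BG \<equiv> BijGroup NN"
abbreviation "r0 \<equiv> restrict (\<lambda>i. (i + 1) mod n) NN"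
abbreviation "s0 \<equiv> restrict (\<lambda>i. (n - i) mod n) NN"
abbreviation "r0' \<equiv> restrict (\<lambda>i. (n + i - 1) mod n) NN"

lemma carrBG: "carrier BG = Bij NN" by (simp add: BijGroup_def)
lemma oneBG: "\<one>\<^bsub>BG\<^esub> = (\<lambda>x\<in>NN. x)" by (simp add: BijGroup_def)
lemma multBG: "f \<in> Bij NN \<Longrightarrow> g \<in> Bij NN \<Longrightarrow> f \<otimes>\<^bsub>BG\<^esub> g = compose NN f g"
  by (simp add: BijGroup_def)

lemma r0B: "r0 \<in> Bij NN"
  by (rule BijI[where g = r0']) (auto simp: npos ar10 ar10')
lemma r0'B: "r0' \<in> Bij NN"
  by (rule BijI[where g = r0]) (auto simp: npos ar10 ar10')
lemma s0B: "s0 \<in> Bij NN"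
  by (rule BijI[where g = s0]) (auto simp: npos ar11)

lemma fun_eqI_NN: assumes "f \<in> extensional NN" "g \<in> extensional NN" "\<forall>x\<in>NN. f x = g x"
  shows "f = g"
  by (rule extensionalityI[OF assms(1,2)]) (use assms(3) in blast)

abbreviation "genD \<equiv> generate BG {r0, s0}"

lemma DD_carr: "carrier (dihedral n) = genD" by (simp add: dihedral_def)
lemma DD_mult: "f \<otimes>\<^bsub>dihedral n\<^esub> g = f \<otimes>\<^bsub>BG\<^esub> g" by (simp add: dihedral_def)

lemma gensD: "{r0, s0} \<subseteq> carrier BG" using r0B s0B carrBG by auto
lemma genD_B: "d \<in> genD \<Longrightarrow> d \<in> Bij NN"
  using group.generate_in_carrier[OF group_BijGroup gensD] carrBG by auto

lemma grpDD: "group (dihedral n)"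
proof -
  have "subgroup genD BG" by (rule group.generate_is_subgroup[OF group_BijGroup gensD])
  hence "group (BG\<lparr>carrier := genD\<rparr>)" by (rule group.subgroup_imp_group[OF group_BijGroup])
  thus ?thesis by (simp add: dihedral_def)
qed

definition Dh :: "nat \<Rightarrow> bool \<Rightarrow> nat \<Rightarrow> nat" where
  "Dh a e = restrict (\<lambda>i. (a + (if e then n - i else i)) mod n) NN"

lemma Dh_ext: "Dh a e \<in> extensional NN" by (simp add: Dh_def)

lemma Dh_gen: "Dh a e \<in> genD"
proof (induction a)
  case 0
  show ?case
  proof (cases e)
    case False
    have "Dh 0 e = \<one>\<^bsub>BG\<^esub>" unfolding oneBG
      by (rule fun_eqI_NN[OF Dh_ext]) (auto simp: Dh_def False)
    thus ?thesis using generate.one by metis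
  next
    case True
    have "Dh 0 e = s0"
      by (rule fun_eqI_NN[OF Dh_ext]) (auto simp: Dh_def True)
    thus ?thesis by (auto intro: generate.incl)
  qed
next
  case (Suc a)
  have B: "Dh a e \<in> Bij NN" using genD_B[OF Suc.IH] .
  have "Dh (Suc a) e = r0 \<otimes>\<^bsub>BG\<^esub> Dh a e"
    unfolding multBG[OF r0B B]
    by (rule fun_eqI_NN[OF Dh_ext]) (auto simp: Dh_def compose_eq mod_Suc_eq npos)
  moreover have "r0 \<in> genD" by (auto intro: generate.incl)
  ultimately show ?case using generate.eng[OF _ Suc.IH] by metis
qed

definition psi :: "(nat \<Rightarrow> nat) \<times> int \<Rightarrow> vert \<Rightarrow> vert" where
  "psi p = restrict (\<lambda>(s,i,j). (s, fst p i, j \<noteq> (snd p = 1))) VV"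

lemma psi_app: "i < n \<Longrightarrow> psi (d,z) (s,i,j) = (s, d i, j \<noteq> (z = 1))"
  by (simp add: psi_def)
lemma psi_ext: "psi p \<in> extensional VV" by (simp add: psi_def)

lemma psi_FF: "psi (Dh a e, if b then 1 else 0) = FF a e b"
  by (rule fun_eqI_VV[OF psi_ext FF_ext]) (auto simp: VV_split psi_app FF_app Dh_def)

lemma psi_hom:
  assumes "d1 \<in> Bij NN" "d2 \<in> Bij NN" "z1 \<in> {0,1}" "z2 \<in> {0,1}"
  shows "psi (compose NN d1 d2, (z1 + z2) mod 2) = compose VV (psi (d1,z1)) (psi (d2,z2))"
proof (rule fun_eqI_VV[OF psi_ext compose_extensional])
  have "\<forall>s i j. i < n \<longrightarrow> psi (compose NN d1 d2, (z1 + z2) mod 2) (s,i,j) = compose VV (psi (d1,z1)) (psi (d2,z2)) (s,i,j)"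
  proof (intro allI impI)
    fix s i j assume i: "(i::nat) < n"
    have d2i: "d2 i < n" using Bij_in[OF assms(2)] i by simp
    show "psi (compose NN d1 d2, (z1 + z2) mod 2) (s,i,j) = compose VV (psi (d1,z1)) (psi (d2,z2)) (s,i,j)"
      using i d2i assms(3,4) by (auto simp: psi_app compose_eq)
  qed
  thus "\<forall>x\<in>VV. psi (compose NN d1 d2, (z1 + z2) mod 2) x = compose VV (psi (d1,z1)) (psi (d2,z2)) x"
    unfolding VV_split .
qed

lemma psi_r0: "psi (r0, 0) = rho n"
  by (rule fun_eqI_VV[OF psi_ext]) (auto simp: VV_split psi_app rho_app rho_def)
lemma psi_s0: "psi (s0, 0) = delta n"
  by (rule fun_eqI_VV[OF psi_ext]) (auto simp: VV_split psi_app delta_app delta_def)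
lemma psi_r0': "psi (r0', 0) = FF (n-1) False False"
  by (rule fun_eqI_VV[OF psi_ext FF_ext]) (auto simp: VV_split psi_app FF_app)
lemma psi_one: "psi (\<one>\<^bsub>BG\<^esub>, 0) = \<one>\<^bsub>GG\<^esub>"
  unfolding oneBG oneG
  by (rule fun_eqI_VV[OF psi_ext]) (auto simp: VV_split psi_app)

lemma inv_r0: "inv\<^bsub>BG\<^esub> r0 = r0'"
proof (rule group.inv_equality[OF group_BijGroup])
  show "r0 \<in> carrier BG" "r0' \<in> carrier BG" using r0B r0'B carrBG by auto
  show "r0' \<otimes>\<^bsub>BG\<^esub> r0 = \<one>\<^bsub>BG\<^esub>" unfolding multBG[OF r0'B r0B] oneBG
    by (rule fun_eqI_NN) (auto simp: compose_eq npos ar10')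
qed
lemma inv_s0: "inv\<^bsub>BG\<^esub> s0 = s0"
proof (rule group.inv_equality[OF group_BijGroup])
  show "s0 \<in> carrier BG" "s0 \<in> carrier BG" using s0B carrBG by auto
  show "s0 \<otimes>\<^bsub>BG\<^esub> s0 = \<one>\<^bsub>BG\<^esub>" unfolding multBG[OF s0B s0B] oneBG
    by (rule fun_eqI_NN) (auto simp: compose_eq npos ar11)
qed

lemma psi_gen: "d \<in> genD \<Longrightarrow> psi (d, 0) \<in> CC"
proof (induction rule: generate.induct)
  case one thus ?case using psi_one subgroup.one_closed[OF subC] by simp
next
  case (incl h)
  hence "h = r0 \<or> h = s0" by simp
  thus ?case
  proof
    assume "h = r0" hence "psi (h,0) = rho n" using psi_r0 by (simp only:)
    thus ?case using rhoC by (simp only:)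
  next
    assume "h = s0" hence "psi (h,0) = delta n" using psi_s0 by (simp only:)
    thus ?case using deltaC by (simp only:)
  qed
next
  case (inv h)
  have r': "psi (r0', 0) \<in> CC" using psi_r0' FF_gen gen3_C by auto
  from inv have "h = r0 \<or> h = s0" by simp
  thus ?case
  proof
    assume "h = r0" hence "psi (inv\<^bsub>BG\<^esub> h,0) = psi (r0',0)" using inv_r0 by (simp only:)
    thus ?case using r' by (simp only:)
  next
    assume "h = s0" hence "psi (inv\<^bsub>BG\<^esub> h,0) = delta n" using psi_s0 inv_s0 by (simp only:)
    thus ?case using deltaC by (simp only:)
  qed
next
  case (eng h1 h2)
  have B: "h1 \<in> Bij NN" "h2 \<in> Bij NN" using genD_B eng.hyps by auto
  have "psi (h1 \<otimes>\<^bsub>BG\<^esub> h2, 0) = psi (compose NN h1 h2, (0 + 0) mod 2)" using multBG[OF B] by simp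
  also have "\<dots> = compose VV (psi (h1,0)) (psi (h2,0))" by (rule psi_hom[OF B]) auto
  also have "\<dots> = psi (h1,0) \<otimes>\<^bsub>GG\<^esub> psi (h2,0)" using multG CB eng.IH by auto
  finally show ?case using subgroup.m_closed[OF subC eng.IH] by simp
qed

lemma psi_C: assumes "d \<in> genD" "z \<in> {0,1}" shows "psi (d, z) \<in> CC"
proof (cases "z = 0")
  case True thus ?thesis using psi_gen assms by simp
next
  case False
  hence z: "z = 1" using assms by auto
  have B: "d \<in> Bij NN" using genD_B assms by simp
  have "psi (d, z) = compose VV (beta n) (psi (d, 0))"
  proof (rule fun_eqI_VV[OF psi_ext compose_extensional])
    show "\<forall>x\<in>VV. psi (d, z) x = compose VV (beta n) (psi (d, 0)) x" unfolding VV_split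
      using Bij_in[OF B] z by (auto simp: psi_app beta_app compose_eq)
  qed
  also have "\<dots> = beta n \<otimes>\<^bsub>GG\<^esub> psi (d, 0)" using multG betaB CB psi_gen assms by auto
  finally show ?thesis using subgroup.m_closed[OF subC betaC psi_gen[OF assms(1)]] by simp
qed

lemma Z2_carr: "carrier (integer_mod_group 2) = {0,1}"
  by (auto simp: carrier_integer_mod_group)

lemma iso_part: assumes "n \<noteq> 4*k"
  shows "GG\<lparr>carrier := CC\<rparr> \<cong> DirProd (dihedral n) (integer_mod_group 2)"
proof -
  let ?P = "DirProd (dihedral n) (integer_mod_group 2)"
  have grpP: "group ?P" by (rule DirProd_group[OF grpDD group_integer_mod_group])
  have hom: "psi \<in> hom ?P (GG\<lparr>carrier := CC\<rparr>)"
  proof (rule homI)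
    fix x assume "x \<in> carrier ?P"
    then obtain d z where x: "x = (d,z)" "d \<in> genD" "z \<in> {0,1}" by (auto simp: DD_carr Z2_carr)
    show "psi x \<in> carrier (GG\<lparr>carrier := CC\<rparr>)" using psi_C x by simp
  next
    fix x y assume "x \<in> carrier ?P" "y \<in> carrier ?P"
    then obtain d1 z1 d2 z2 where x: "x = (d1,z1)" "d1 \<in> genD" "z1 \<in> {0,1}"
      and y: "y = (d2,z2)" "d2 \<in> genD" "z2 \<in> {0,1}" by (auto simp: DD_carr Z2_carr)
    have B: "d1 \<in> Bij NN" "d2 \<in> Bij NN" using genD_B x y by auto
    have "x \<otimes>\<^bsub>?P\<^esub> y = (compose NN d1 d2, (z1 + z2) mod 2)"
      using x y multBG[OF B] by (simp add: DD_mult)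
    hence "psi (x \<otimes>\<^bsub>?P\<^esub> y) = compose VV (psi (d1,z1)) (psi (d2,z2))"
      using psi_hom[OF B x(3) y(3)] by simp
    also have "\<dots> = psi x \<otimes>\<^bsub>GG\<^esub> psi y" using multG CB psi_C x y by auto
    finally show "psi (x \<otimes>\<^bsub>?P\<^esub> y) = psi x \<otimes>\<^bsub>GG\<lparr>carrier := CC\<rparr>\<^esub> psi y" by simp
  qed
  have inj: "inj_on psi (carrier ?P)"
  proof (rule inj_onI)
    fix x y assume "x \<in> carrier ?P" "y \<in> carrier ?P" and eq: "psi x = psi y"
    then obtain d1 z1 d2 z2 where x: "x = (d1,z1)" "d1 \<in> genD" "z1 \<in> {0,1}"
      and y: "y = (d2,z2)" "d2 \<in> genD" "z2 \<in> {0,1}" by (auto simp: DD_carr Z2_carr)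
    have B: "d1 \<in> Bij NN" "d2 \<in> Bij NN" using genD_B x y by auto
    have pt: "d1 i = d2 i \<and> ((z1 = 1) = (z2 = 1))" if i: "i < n" for i
      using fun_cong[OF eq, of "(U,i,False)"] i x y by (simp add: psi_app)
    have "d1 = d2"
      by (rule fun_eqI_NN[OF Bij_imp_extensional[OF B(1)] Bij_imp_extensional[OF B(2)]]) (use pt in auto)
    moreover have "z1 = z2" using pt[OF npos] x(3) y(3) by auto
    ultimately show "x = y" using x y by simp
  qed
  have img: "psi ` carrier ?P = CC"
  proof
    show "psi ` carrier ?P \<subseteq> CC" using hom by (auto simp: hom_def)
    show "CC \<subseteq> psi ` carrier ?P"
    proof
      fix \<sigma> assume "\<sigma> \<in> CC"
      then obtain a e b where s: "\<sigma> = FF a e b" using CC_form assms by blast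
      have "(Dh a e, if b then 1 else 0) \<in> carrier ?P" using Dh_gen by (simp add: DD_carr Z2_carr)
      thus "\<sigma> \<in> psi ` carrier ?P" using s psi_FF by (metis image_eqI)
    qed
  qed
  have "psi \<in> iso ?P (GG\<lparr>carrier := CC\<rparr>)"
    by (rule isoI[OF hom]) (use inj img in \<open>simp add: bij_betw_def\<close>)
  hence "?P \<cong> GG\<lparr>carrier := CC\<rparr>" by (rule is_isoI)
  thus ?thesis by (rule group.iso_sym[OF grpP])
qed

end

theorem proposition5p2:
  fixes n k :: nat
  assumes "even n" and "even k" and "1 \<le> k" and "2 * k < n"
  shows "(n \<noteq> 4 * k \<longrightarrow>
            Cnk n k = generate (SymV n) {rho n, delta n, beta n} \<and>
            (SymV n)\<lparr>carrier := Cnk n k\<rparr> \<cong> DirProd (dihedral n) (integer_mod_group 2))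
       \<and> (n = 4 * k \<longrightarrow>
            Cnk n k = generate (SymV n) {rho n, delta n, beta n, theta n k})"
proof -
  interpret dgp n k using assms by unfold_locales
  show ?thesis using C_eq3 C_eq4 iso_part by blast
qed

end
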